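(* Let $q$ be even. The unipotent conjugacy classes of type $(2,1)$ in $\mathbf{SL}_3(q)$ are not of type F.
   Context: Type $(2,1)$: Jordan blocks of sizes 2 and 1. Conjugacy classes are racks with $x\triangleright y=xyx^{-1}$. A rack is of type F if it has pairwise disjoint subracks $R_1,\dots,R_4$ and elements $r_a\in R_a$ with $R_a\triangleright R_b=R_b$ and $r_a\triangleright r_b\neq r_b$ for all $a\neq b$. *)

theory Defs
  imports "HOL-Analysis.Analysis" "HOL-Library.Numeral_Type"
begin

definition is_subrack :: "'a set \<Rightarrow> ('a \<Rightarrow> 'a \<Rightarrow> 'a) \<Rightarrow> 'a set \<Rightarrow> bool" where
  "is_subrack X op R \<longleftrightarrow> R \<subseteq> X \<and> (\<forall>x\<in>R. \<forall>y\<in>R. op x y \<in> R)"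

definition rack_type_F :: "'a set \<Rightarrow> ('a \<Rightarrow> 'a \<Rightarrow> 'a) \<Rightarrow> bool" where
  "rack_type_F X op \<longleftrightarrow>
     (\<exists>(R :: nat \<Rightarrow> 'a set) (r :: nat \<Rightarrow> 'a).
        (\<forall>a<4. is_subrack X op (R a) \<and> r a \<in> R a) \<and>
        (\<forall>a<4. \<forall>b<4. a \<noteq> b \<longrightarrow>
            R a \<inter> R b = {} \<and>
            {op x y | x y. x \<in> R a \<and> y \<in> R b} = R b \<and>
            op (r a) (r b) \<noteq> r b))"

definition conj_op :: "'a::field^'n^'n \<Rightarrow> 'a^'n^'n \<Rightarrow> 'a^'n^'n" where
  "conj_op x y = x ** y ** matrix_inv x"

definition SL_conj_class :: "'a::field^'n^'n \<Rightarrow> ('a^'n^'n) set" where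
  "SL_conj_class u = {g ** u ** matrix_inv g | g. det g = 1}"

text \<open>Unipotent of Jordan type (2,1) in dimension 3: u \<noteq> 1 and (u - 1)^2 = 0.\<close>
definition unipotent_type21 :: "'a::field^3^3 \<Rightarrow> bool" where
  "unipotent_type21 u \<longleftrightarrow> u \<noteq> mat 1 \<and> (u - mat 1) ** (u - mat 1) = 0"

end

theory Submission
  imports Defs
begin

definition outer :: "'a::field^3 \<Rightarrow> 'a^3 \<Rightarrow> 'a^3^3" where
  "outer v p = (\<chi> i j. v$i * p$j)"
definition dot :: "'a::field^3 \<Rightarrow> 'a^3 \<Rightarrow> 'a" where
  "dot x y = x$1*y$1 + x$2*y$2 + x$3*y$3"
definition lin :: "'a::field^3 \<Rightarrow> 'a^3 \<Rightarrow> 'a^3 \<Rightarrow> 'a^3 \<Rightarrow> 'a \<Rightarrow> 'a \<Rightarrow> 'a \<Rightarrow> 'a \<Rightarrow> 'a \<Rightarrow> 'a^3^3" where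
  "lin v p w q k0 k1 k2 k3 k4 = (\<chi> i j. k0 * (if i = j then 1 else 0) + k1 * (v$i*p$j) + k2*(w$i*q$j) + k3*(v$i*q$j) + k4*(w$i*p$j))"

lemma lin_mult:
  fixes v p w q :: "'a::field^3"
  assumes "dot p v = 0" "dot q w = 0"
  shows "lin v p w q k0 k1 k2 k3 k4 ** lin v p w q l0 l1 l2 l3 l4 =
    lin v p w q (k0*l0) (k0*l1 + k1*l0 + k1*l4*dot p w + k3*l1*dot q v)
     (k0*l2 + k2*l0 + k2*l3*dot q v + k4*l2*dot p w)
     (k0*l3 + k3*l0 + k1*l2*dot p w + k3*l3*dot q v)
     (k0*l4 + k4*l0 + k2*l1*dot q v + k4*l4*dot p w)"
  using assms
  unfolding vec_eq_iff matrix_matrix_mult_def lin_def dot_def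
  apply (simp add: forall_3 sum_3)
  apply (intro conjI)
  apply algebra+
  done

lemma lin_cong: "k0=l0 \<Longrightarrow> k1=l1 \<Longrightarrow> k2=l2 \<Longrightarrow> k3=l3 \<Longrightarrow> k4=l4 \<Longrightarrow>
  lin v p w q k0 k1 k2 k3 k4 = lin v p w q l0 l1 l2 l3 l4" by simp

primrec mpow :: "'a::field^3^3 \<Rightarrow> nat \<Rightarrow> 'a^3^3" where
  "mpow c 0 = mat 1"
| "mpow c (Suc n) = c ** mpow c n"

lemma mpow_add: "mpow c (m + n) = mpow c m ** mpow c n"
  by (induction m) (simp_all add: matrix_mul_assoc)

lemma mpow_comm: "mpow c n ** c = c ** mpow c n"
  by (induction n) (simp_all add: matrix_mul_assoc[symmetric])

lemma char2_sq_inj: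
  fixes x y :: "'a::field"
  assumes two: "(2::'a) = 0" and e: "x^2 = y^2" shows "x = y"
proof -
  have "(x - y)^2 = (x^2 - y^2) - 2 * (x*y - y^2)" by (simp add: power2_eq_square algebra_simps)
  also have "\<dots> = 0" unfolding e two by simp
  finally show ?thesis by simp
qed

lemma inv_self:
  fixes x :: "'a::field^3^3"
  assumes "x ** x = mat 1" shows "matrix_inv x = x"
proof -
  have ex: "\<exists>A'. x ** A' = mat 1 \<and> A' ** x = mat 1" using assms by blast
  let ?B = "matrix_inv x"
  have B: "x ** ?B = mat 1 \<and> ?B ** x = mat 1"
    unfolding matrix_inv_def by (rule someI_ex[OF ex])
  have "?B = (x ** x) ** ?B" using assms by simp
  also have "\<dots> = x ** (x ** ?B)" by (simp add: matrix_mul_assoc)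
  also have "\<dots> = x" using B by simp
  finally show ?thesis .
qed

definition fsq :: "'a::field \<Rightarrow> 'a \<times> 'a \<times> 'a \<Rightarrow> 'a \<times> 'a \<times> 'a" where
  "fsq l z = (case z of (al, a, b) \<Rightarrow> (al^2, a^2 - b^2, 2*a*b + (2+l)*b^2))"

lemma fsq_inj:
  fixes l :: "'a::field"
  assumes "(2::'a) = 0" "l \<noteq> 0" shows "inj (fsq l)"
proof (rule injI)
  fix z z' assume eq: "fsq l z = fsq l z'"
  obtain al a b where z: "z = (al, a, b)" by (cases z) auto
  obtain al' a' b' where z': "z' = (al', a', b')" by (cases z') auto
  have e1: "al^2 = al'^2" and e2: "a^2 - b^2 = a'^2 - b'^2" and e3: "l*b^2 = l*b'^2"
  proof -
    have E: "al^2 = al'^2 \<and> a^2 - b^2 = a'^2 - b'^2 \<and> 2*a*b + (2+l)*b^2 = 2*a'*b' + (2+l)*b'^2"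
      using eq by (simp add: fsq_def z z')
    have h: "\<And>x y::'a. 2*x*y + (2+l)*y^2 = l*y^2" unfolding assms(1) by simp
    show "al^2 = al'^2" "a^2 - b^2 = a'^2 - b'^2" using E by simp_all
    show "l*b^2 = l*b'^2" using E h[of a b] h[of a' b'] by simp
  qed
  have "b^2 = b'^2" using e3 assms(2) by simp
  hence B: "b = b'" by (rule char2_sq_inj[OF assms(1)])
  have "a^2 = a'^2" using e2 B by simp
  hence A: "a = a'" by (rule char2_sq_inj[OF assms(1)])
  have C: "al = al'" using e1 by (rule char2_sq_inj[OF assms(1)])
  from A B C show "z = z'" by (simp add: z z')
qed

lemma finite_return:
  fixes f :: "'b::finite \<Rightarrow> 'b"
  assumes "inj f" shows "\<exists>m\<ge>1. (f ^^ m) z = z"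
proof -
  let ?T = "\<lambda>k. (f ^^ k) z"
  have "\<not> inj ?T"
  proof
    assume "inj ?T"
    have "finite (range ?T)" by (rule finite_subset[OF subset_UNIV]) simp
    hence "finite (UNIV::nat set)" using \<open>inj ?T\<close> by (rule finite_imageD)
    thus False by simp
  qed
  then obtain i j where ij: "?T i = ?T j" "i \<noteq> j" unfolding inj_on_def by auto
  have key: "\<exists>m\<ge>1. (f ^^ m) z = z" if "i < j" "?T i = ?T j" for i j
  proof -
    have "(f^^i) ((f^^(j-i)) z) = (f^^(i + (j-i))) z" by (simp add: funpow_add)
    also have "\<dots> = (f^^i) z" using that by simp
    finally have "(f^^i) ((f^^(j-i)) z) = (f^^i) z" .
    hence "(f^^(j-i)) z = z" by (rule injD[OF inj_fn[OF assms]])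
    thus ?thesis using \<open>i<j\<close> by (intro exI[of _ "j-i"]) simp
  qed
  show ?thesis
  proof (cases "i < j")
    case True show ?thesis by (rule key[OF True ij(1)])
  next
    case False hence "j < i" using ij(2) by simp
    show ?thesis by (rule key[OF \<open>j < i\<close> ij(1)[symmetric]])
  qed
qed

lemma emb3_scalar:
  fixes s t al a b :: "'a::field"
  assumes "s \<noteq> 0" "t \<noteq> 0"
  defines "XX \<equiv> ((a-al) + b*(1+s* t))/t" and "YY \<equiv> (a-al+b)/s"
  defines "al' \<equiv> al^2" and "a' \<equiv> a^2-b^2" and "b' \<equiv> 2*a*b+(2+s* t)*b^2"
  shows "al*al = al'"
    "al*b + b*al + b*YY* s + XX*b* t = b'"
    "al*b + b*al + b*XX* t + YY*b* s = b'"
    "al*XX + XX*al + b*b* s + XX*XX* t = ((a'-al') + b'*(1+s* t))/t"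
    "al*YY + YY*al + b*b* t + YY*YY* s = (a'-al'+b')/s"
  using assms(1,2) unfolding XX_def YY_def al'_def a'_def b'_def
  by (simp_all add: field_simps power2_eq_square)

context
  fixes v p w q :: "'a::{field,finite}^3"
  assumes pv: "dot p v = 0" and qw: "dot q w = 0"
    and sne: "dot p w \<noteq> 0" and tne: "dot q v \<noteq> 0"
begin

definition "emb3 z = (case z of (al, a, b) \<Rightarrow>
   lin v p w q al b b (((a-al) + b*(1 + dot p w * dot q v))/dot q v) ((a-al+b)/dot p w))"

lemma emb3_sq: "emb3 z ** emb3 z = emb3 (fsq (dot p w * dot q v) z)"
proof -
  obtain al a b where z: "z = (al, a, b)" by (cases z) auto
  show ?thesis
    unfolding z emb3_def fsq_def split lin_mult[OF pv qw]
    by (rule lin_cong; rule emb3_scalar[OF sne tne])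
qed


lemma emb3_base: "emb3 (1,0,1) = lin v p w q 1 1 1 (dot p w) 0"
  unfolding emb3_def split using sne tne by (intro lin_cong) (simp_all add: field_simps)

lemma emb3_pow: "mpow (lin v p w q 1 1 1 (dot p w) 0) (2^k) = emb3 ((fsq (dot p w * dot q v) ^^ k) (1,0,1))"
proof (induction k)
  case 0 show ?case by (simp add: emb3_base)
next
  case (Suc k)
  have "mpow (lin v p w q 1 1 1 (dot p w) 0) (2^Suc k) =
     mpow (lin v p w q 1 1 1 (dot p w) 0) (2^k + 2^k)" by (simp add: mult_2)
  also have "\<dots> = emb3 ((fsq (dot p w * dot q v) ^^ k) (1,0,1)) ** emb3 ((fsq (dot p w * dot q v) ^^ k) (1,0,1))"
    unfolding mpow_add Suc ..
  also have "\<dots> = emb3 ((fsq (dot p w * dot q v) ^^ Suc k) (1,0,1))" by (simp add: emb3_sq)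
  finally show ?case .
qed

lemma c_return:
  assumes two: "(2::'a) = 0"
  shows "\<exists>m\<ge>1. mpow (lin v p w q 1 1 1 (dot p w) 0) (2^m) = lin v p w q 1 1 1 (dot p w) 0"
proof -
  have "inj (fsq (dot p w * dot q v))" using fsq_inj[OF two] sne tne by simp
  from finite_return[OF this, of "(1,0,1)"] obtain m where "m \<ge> 1"
    "(fsq (dot p w * dot q v) ^^ m) (1,0,1) = (1,0,1)" by blast
  thus ?thesis using emb3_pow[of m] emb3_base by auto
qed

end

lemma lin_I: "lin v p w q 1 0 0 0 0 = mat 1"
  by (simp add: lin_def mat_def vec_eq_iff)

lemma lin_x: "lin v p w q 1 1 0 0 0 = mat 1 + outer v p"
  by (simp add: lin_def mat_def vec_eq_iff outer_def)

lemma lin_y: "lin v p w q 1 0 1 0 0 = mat 1 + outer w q"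
  by (simp add: lin_def mat_def vec_eq_iff outer_def)

lemma orbit:
  fixes x y :: "'a::field^3^3"
  assumes xx: "x ** x = mat 1" and yy: "y ** y = mat 1" and m: "m \<ge> 1"
    and ret: "mpow (x ** y) (2^m) = x ** y"
    and yR: "y \<in> Rb" and cx: "\<forall>z\<in>Rb. conj_op x z \<in> Rb"
    and cl: "\<forall>z\<in>Rb. \<forall>z'\<in>Rb. conj_op z z' \<in> Rb"
  shows "x \<in> Rb"
proof -
  let ?c = "x ** y"
  have ix: "matrix_inv x = x" by (rule inv_self[OF xx])
  have iy: "matrix_inv y = y" by (rule inv_self[OF yy])
  have cy: "?c ** y = x" by (simp add: matrix_mul_assoc[symmetric] yy)
  have step: "mpow ?c (2 * Suc k) ** y \<in> Rb" if "mpow ?c (2 * k) ** y \<in> Rb" for k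
  proof -
    let ?M = "mpow ?c (2*k)"
    have "conj_op y (?M ** y) \<in> Rb" using cl yR that by blast
    hence "conj_op x (conj_op y (?M ** y)) \<in> Rb" using cx by blast
    moreover have "conj_op x (conj_op y (?M ** y)) = mpow ?c (2 * Suc k) ** y"
    proof -
      have "conj_op x (conj_op y (?M ** y)) = x ** (y ** (?M ** y) ** y) ** x"
        unfolding conj_op_def ix iy ..
      also have "\<dots> = ?c ** (?M ** (y ** y)) ** x" by (simp add: matrix_mul_assoc)
      also have "\<dots> = ?c ** (?M ** (?c ** y))" by (simp add: yy cy matrix_mul_assoc)
      also have "\<dots> = ?c ** ((?M ** ?c) ** y)" by (simp add: matrix_mul_assoc)
      also have "\<dots> = ?c ** ((?c ** ?M) ** y)" by (simp only: mpow_comm)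
      also have "\<dots> = mpow ?c (2 * Suc k) ** y" by (simp add: matrix_mul_assoc)
      finally show ?thesis .
    qed
    ultimately show ?thesis by simp
  qed
  have all: "mpow ?c (2 * k) ** y \<in> Rb" for k
  proof (induction k)
    case 0 show ?case using yR by simp
  next
    case (Suc k) show ?case by (rule step[OF Suc.IH])
  qed
  have "mpow ?c (2 * 2^(m-1)) ** y \<in> Rb" by (rule all)
  moreover have "2 * 2^(m-1) = (2::nat)^m" using m by (cases m) simp_all
  ultimately have "mpow ?c (2^m) ** y \<in> Rb" by simp
  thus ?thesis using ret cy by simp
qed

lemma odd_case:
  fixes v p w q :: "'a::{field,finite}^3"
  assumes two: "(2::'a) = 0" and pv: "dot p v = 0" and qw: "dot q w = 0"
    and sne: "dot p w \<noteq> 0" and tne: "dot q v \<noteq> 0"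
    and yR: "mat 1 + outer w q \<in> Rb" and cx: "\<forall>z\<in>Rb. conj_op (mat 1 + outer v p) z \<in> Rb"
    and cl: "\<forall>z\<in>Rb. \<forall>z'\<in>Rb. conj_op z z' \<in> Rb"
  shows "mat 1 + outer v p \<in> Rb"
proof -
  let ?x = "lin v p w q 1 1 0 0 0" and ?y = "lin v p w q 1 0 1 0 0"
  have 11: "(1::'a) + 1 = 0" using two by simp
  have "?x ** ?x = lin v p w q 1 0 0 0 0" unfolding lin_mult[OF pv qw]
    by (rule lin_cong) (simp_all add: 11 two)
  hence xx: "?x ** ?x = mat 1" by (simp only: lin_I)
  have "?y ** ?y = lin v p w q 1 0 0 0 0" unfolding lin_mult[OF pv qw]
    by (rule lin_cong) (simp_all add: 11 two)
  hence yy: "?y ** ?y = mat 1" by (simp only: lin_I)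
  have xy: "?x ** ?y = lin v p w q 1 1 1 (dot p w) 0" unfolding lin_mult[OF pv qw]
    by (rule lin_cong) simp_all
  obtain m where "m \<ge> 1" "mpow (?x ** ?y) (2^m) = ?x ** ?y"
    using c_return[OF pv qw sne tne two] unfolding xy by blast
  from orbit[OF xx yy this] yR cx cl show ?thesis unfolding lin_x lin_y by blast
qed

lemma invol_even:
  assumes "finite S" "\<forall>x\<in>S. f x \<in> S \<and> f x \<noteq> x \<and> f (f x) = x"
  shows "even (card S)"
  using assms
proof (induction "card S" arbitrary: S rule: less_induct)
  case less
  show ?case
  proof (cases "S = {}")
    case True then show ?thesis by simp
  next
    case False
    then obtain x where x: "x \<in> S" by blast
    let ?T = "S - {x, f x}"
    have fx: "f x \<in> S" "f x \<noteq> x" using less.prems x by auto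
    have sub: "{x, f x} \<subseteq> S" using x fx by auto
    have cT: "card ?T = card S - 2"
      using card_Diff_subset[OF _ sub] less.prems(1) fx(2) by (simp add: finite_subset[OF sub])
    have cS: "card S \<ge> 2" using card_mono[OF less.prems(1) sub] fx(2) by simp
    have "even (card ?T)"
    proof (rule less.hyps)
      show "card ?T < card S" using cT cS by simp
      show "finite ?T" using less.prems(1) by simp
      show "\<forall>y\<in>?T. f y \<in> ?T \<and> f y \<noteq> y \<and> f (f y) = y"
      proof
        fix y assume y: "y \<in> ?T"
        have P: "f y \<in> S \<and> f y \<noteq> y \<and> f (f y) = y" using less.prems(2) y by blast
        have yx: "y \<noteq> x" "y \<noteq> f x" using y by auto
        have ffx: "f (f x) = x" using less.prems(2) x by blast
        have "f y \<noteq> x"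
        proof
          assume "f y = x" hence "f (f y) = f x" by simp
          thus False using P yx by simp
        qed
        moreover have "f y \<noteq> f x"
        proof
          assume "f y = f x" hence "f (f y) = f (f x)" by simp
          thus False using P yx ffx by simp
        qed
        ultimately show "f y \<in> ?T \<and> f y \<noteq> y \<and> f (f y) = y" using P by simp
      qed
    qed
    thus ?thesis using cT cS by simp
  qed
qed

lemma char2:
  assumes "even CARD('a)" shows "(2::'a::{field,finite}) = 0"
proof (rule ccontr)
  assume two: "(2::'a) \<noteq> 0"
  let ?S = "UNIV - {0::'a}"
  have "even (card ?S)"
  proof (rule invol_even[of ?S uminus])
    show "finite ?S" by simp
    show "\<forall>x\<in>?S. - x \<in> ?S \<and> - x \<noteq> x \<and> - (- x) = x"
    proof
      fix x :: 'a assume "x \<in> ?S"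
      hence x0: "x \<noteq> 0" by simp
      have "- x \<noteq> x"
      proof
        assume m: "- x = x"
        have "x + - x = 0" by simp
        hence "x + x = 0" unfolding m .
        hence "2 * x = 0" by (simp only: mult_2)
        thus False using two x0 by simp
      qed
      thus "- x \<in> ?S \<and> - x \<noteq> x \<and> - (- x) = x" using x0 by simp
    qed
  qed
  moreover have "card ?S = CARD('a) - 1" by (simp add: card_Diff_singleton)
  moreover have "CARD('a) > 0" by (rule finite_UNIV_card_ge_0) simp
  ultimately have "CARD('a) = card ?S + 1" by simp
  hence "odd CARD('a)" using \<open>even (card ?S)\<close> by simp
  thus False using assms by simp
qed

lemma rank1_scalar:
  fixes a b c d e f g h i :: "'a::field"
  assumes two: "(2::'a) = 0"
  and q11: "a*a + b*d + c*g = 0" and q12: "a*b + b*e + c*h = 0" and q13: "a*c + b*f + c*i = 0"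
  and q21: "d*a + e*d + f*g = 0" and q22: "d*b + e*e + f*h = 0" and q23: "d*c + e*f + f*i = 0"
  and q31: "g*a + h*d + i*g = 0" and q32: "g*b + h*e + i*h = 0" and q33: "g*c + h*f + i*i = 0"
  and nz: "a \<noteq> 0 \<or> b \<noteq> 0 \<or> c \<noteq> 0 \<or> d \<noteq> 0 \<or> e \<noteq> 0 \<or> f \<noteq> 0 \<or> g \<noteq> 0 \<or> h \<noteq> 0 \<or> i \<noteq> 0"
  shows "a*e - b*d = 0 \<and> a*f - c*d = 0 \<and> b*f - c*e = 0 \<and> a*h - b*g = 0 \<and> a*i - c*g = 0 \<and>
         b*i - c*h = 0 \<and> d*h - e*g = 0 \<and> d*i - f*g = 0 \<and> e*i - f*h = 0"
proof -
  have "(a+e+i)^2 = (a*a + b*d + c*g) + (d*b + e*e + f*h) + (g*c + h*f + i*i) + 2*(a*e + a*i + e*i - b*d - c*g - f*h)"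
    by algebra
  hence "(a+e+i)^2 = 0" unfolding q11 q22 q33 two by simp
  hence tr: "a+e+i = 0" by simp
  have o1: "d*i - f*g = 0" using q21 tr by algebra
  have o2: "d*h - e*g = 0" using q31 tr by algebra
  have o3: "b*i - c*h = 0" using q12 tr by algebra
  have o4: "a*h - b*g = 0" using q32 tr by algebra
  have o5: "b*f - c*e = 0" using q13 tr by algebra
  have o6: "a*f - c*d = 0" using q23 tr by algebra
  have s23: "(a*i - c*g) + (a*e - b*d) = 0" using q11 tr by algebra
  have s13: "(e*i - f*h) + (a*e - b*d) = 0" using q22 tr by algebra
  have s12: "(e*i - f*h) + (a*i - c*g) = 0" using q33 tr by algebra
  have dbl: "\<And>y::'a. y + y = 0"
  proof -
    fix y :: 'a
    have "y + y = 2*y" by (simp only: mult_2)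
    thus "y + y = 0" unfolding two by simp
  qed
  have neg: "\<And>x y::'a. x + y = 0 \<Longrightarrow> x = y"
  proof -
    fix x y :: 'a assume "x + y = 0"
    hence "- x = y" by (rule minus_unique)
    moreover have "- x = x" using dbl[of x] by (rule minus_unique)
    ultimately show "x = y" by simp
  qed
  define \<mu> where "\<mu> = e*i - f*h"
  have m2: "a*i - c*g = \<mu>" using neg[OF s12] unfolding \<mu>_def by simp
  have m3: "a*e - b*d = \<mu>" using neg[OF s13] unfolding \<mu>_def by simp
  define D where "D = a*(e*i - f*h) - b*(d*i - f*g) + c*(d*h - e*g)"
  have "a*(e*i - f*h) = D + b*(d*i - f*g) - c*(d*h - e*g)" unfolding D_def by algebra
  hence da: "a*\<mu> = D" using o1 o2 unfolding \<mu>_def by simp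
  have "e*(a*i - c*g) = D + d*(b*i - c*h) + f*(a*h - b*g)" unfolding D_def by algebra
  hence de: "e*\<mu> = D" using m2 o3 o4 by simp
  have "i*(a*e - b*d) = D - g*(b*f - c*e) + h*(a*f - c*d)" unfolding D_def by algebra
  hence di: "i*\<mu> = D" using m3 o5 o6 by simp
  have "(a+e+i)*\<mu> = (D + D) + D" using da de di by (simp add: distrib_right)
  also have "\<dots> = D" by (simp only: dbl add_0_left)
  finally have D0: "D = 0" using tr by simp
  have "b*(a*i - c*g) = a*(b*i - c*h) + c*(a*h - b*g)" by algebra
  hence "b*\<mu> = 0" using m2 o3 o4 by simp
  moreover have "c*(a*e - b*d) = -a*(b*f - c*e) + b*(a*f - c*d)" by algebra
  hence "c*\<mu> = 0" using m3 o5 o6 by simp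
  moreover have "d*(e*i - f*h) = e*(d*i - f*g) - f*(d*h - e*g)" by algebra
  hence "d*\<mu> = 0" using o1 o2 unfolding \<mu>_def by simp
  moreover have "f*(a*e - b*d) = -d*(b*f - c*e) + e*(a*f - c*d)" by algebra
  hence "f*\<mu> = 0" using m3 o5 o6 by simp
  moreover have "g*(e*i - f*h) = h*(d*i - f*g) - i*(d*h - e*g)" by algebra
  hence "g*\<mu> = 0" using o1 o2 unfolding \<mu>_def by simp
  moreover have "h*(a*i - c*g) = g*(b*i - c*h) + i*(a*h - b*g)" by algebra
  hence "h*\<mu> = 0" using m2 o3 o4 by simp
  ultimately have "\<mu> = 0" using nz da de di D0 by auto
  thus ?thesis using o1 o2 o3 o4 o5 o6 m2 m3 \<mu>_def by simp
qed

lemma minors3: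
  fixes N :: "'a::field^3^3"
  assumes two: "(2::'a) = 0" and NN: "N ** N = 0" and nz: "N \<noteq> 0"
  shows "N$i$j * N$k$l = N$i$l * N$k$j"
proof -
  have eqs: "\<forall>r s. (N ** N)$r$s = 0" using NN by simp
  have nz': "N$1$1 \<noteq> 0 \<or> N$1$2 \<noteq> 0 \<or> N$1$3 \<noteq> 0 \<or> N$2$1 \<noteq> 0 \<or> N$2$2 \<noteq> 0 \<or> N$2$3 \<noteq> 0 \<or> N$3$1 \<noteq> 0 \<or> N$3$2 \<noteq> 0 \<or> N$3$3 \<noteq> 0"
    using nz by (simp add: vec_eq_iff forall_3)
  have m: "N$1$1*N$2$2 - N$1$2*N$2$1 = 0 \<and> N$1$1*N$2$3 - N$1$3*N$2$1 = 0 \<and> N$1$2*N$2$3 - N$1$3*N$2$2 = 0 \<and>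
    N$1$1*N$3$2 - N$1$2*N$3$1 = 0 \<and> N$1$1*N$3$3 - N$1$3*N$3$1 = 0 \<and> N$1$2*N$3$3 - N$1$3*N$3$2 = 0 \<and>
    N$2$1*N$3$2 - N$2$2*N$3$1 = 0 \<and> N$2$1*N$3$3 - N$2$3*N$3$1 = 0 \<and> N$2$2*N$3$3 - N$2$3*N$3$2 = 0"
    apply (rule rank1_scalar[OF two])
    using eqs nz' by (simp_all add: matrix_matrix_mult_def sum_3 forall_3)
  have "\<forall>i j k l. N$i$j * N$k$l = N$i$l * N$k$j"
    unfolding forall_3 using m by (simp add: algebra_simps)
  thus ?thesis by blast
qed

lemma rank1:
  fixes N :: "'a::field^3^3"
  assumes two: "(2::'a) = 0" and NN: "N ** N = 0" and nz: "N \<noteq> 0"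
  shows "\<exists>v p. N = outer v p \<and> dot p v = 0 \<and> v \<noteq> 0"
proof -
  have "\<exists>k l. N$k$l \<noteq> 0"
  proof (rule ccontr)
    assume "\<not> (\<exists>k l. N$k$l \<noteq> 0)"
    hence "N = 0" by (simp add: vec_eq_iff)
    thus False using nz by simp
  qed
  then obtain k l where kl: "N$k$l \<noteq> 0" by blast
  define v where "v = (\<chi> i. N$i$l)"
  define p where "p = (\<chi> j. N$k$j / N$k$l)"
  have "N = outer v p"
  proof -
    have e: "N$i$l * N$k$j / N$k$l = N$i$j" for i j
    proof -
      have "N$i$j * N$k$l = N$i$l * N$k$j" by (rule minors3[OF two NN nz])
      thus ?thesis using kl by (simp add: divide_eq_eq)
    qed
    have "outer v p = N" unfolding vec_eq_iff outer_def v_def p_def by (simp add: e)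
    thus ?thesis by simp
  qed
  moreover have "dot p v = 0"
  proof -
    have "dot p v * N$k$l = (N ** N)$k$l"
      using kl by (simp add: dot_def p_def v_def matrix_matrix_mult_def sum_3 distrib_right)
    thus ?thesis using NN kl by simp
  qed
  moreover have "v \<noteq> 0"
  proof
    assume "v = 0" hence "v$k = 0" by simp
    thus False using kl by (simp add: v_def)
  qed
  ultimately show ?thesis by blast
qed

lemma conj_outer:
  fixes g h :: "'a::field^3^3"
  shows "g ** outer v p ** h = outer (g *v v) (p v* h)"
  by (simp add: vec_eq_iff matrix_matrix_mult_def outer_def matrix_vector_mult_def
      vector_matrix_mult_def sum_3 algebra_simps)

lemma dot_vm:
  fixes g h :: "'a::field^3^3"
  shows "dot (p v* h) (g *v v) = dot p ((h ** g) *v v)"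
  by (simp add: dot_def matrix_matrix_mult_def matrix_vector_mult_def
      vector_matrix_mult_def sum_3 algebra_simps)

lemma matrix_add_rdistrib2: "(A + B) ** C = A ** C + B ** (C::'a::semiring_1^'n^'m)"
  by (simp add: vec_eq_iff matrix_matrix_mult_def sum.distrib distrib_right)

lemma class_rep:
  fixes u :: "'a::{field,finite}^3^3"
  assumes two: "(2::'a) = 0" and ut: "unipotent_type21 u" and zin: "z \<in> SL_conj_class u"
  shows "\<exists>v p. z = mat 1 + outer v p \<and> dot p v = 0 \<and> v \<noteq> 0"
proof -
  obtain g where z: "z = g ** u ** matrix_inv g" and dg: "det g = 1"
    using zin unfolding SL_conj_class_def by blast
  have "invertible g" using dg by (simp add: invertible_det_nz)
  hence "\<exists>A'. g ** A' = mat 1 \<and> A' ** g = mat 1" unfolding invertible_def .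
  hence gi: "g ** matrix_inv g = mat 1 \<and> matrix_inv g ** g = mat 1"
    unfolding matrix_inv_def by (rule someI_ex)
  let ?N = "u - mat 1"
  have NN: "?N ** ?N = 0" and Nnz: "?N \<noteq> 0" using ut by (auto simp: unipotent_type21_def)
  obtain v0 p0 where N: "?N = outer v0 p0" and d0: "dot p0 v0 = 0" and v0: "v0 \<noteq> 0"
    using rank1[OF two NN Nnz] by blast
  have u: "u = mat 1 + outer v0 p0" using N by (simp add: algebra_simps)
  have "z = g ** matrix_inv g + g ** outer v0 p0 ** matrix_inv g"
    unfolding z u matrix_add_ldistrib matrix_add_rdistrib2 by simp
  also have "\<dots> = mat 1 + outer (g *v v0) (p0 v* matrix_inv g)"
    using gi by (simp add: conj_outer)
  finally have zz: "z = mat 1 + outer (g *v v0) (p0 v* matrix_inv g)" .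
  have "dot (p0 v* matrix_inv g) (g *v v0) = 0" using gi d0 by (simp add: dot_vm)
  moreover have "g *v v0 \<noteq> 0"
  proof
    assume "g *v v0 = 0"
    hence "matrix_inv g *v (g *v v0) = 0" by simp
    thus False using gi v0 by (simp add: matrix_vector_mul_assoc)
  qed
  ultimately show ?thesis using zz by blast
qed

lemma lin_gen: "lin v p w q 1 (s*t) 1 s t = mat 1 + outer (w + s *s v) (q + t *s p)"
  by (simp add: vec_eq_iff lin_def mat_def outer_def algebra_simps)

lemma conj_formula:
  fixes v p w q :: "'a::field^3"
  assumes two: "(2::'a) = 0" and pv: "dot p v = 0" and qw: "dot q w = 0"
  shows "conj_op (mat 1 + outer v p) (mat 1 + outer w q)
           = mat 1 + outer (w + dot p w *s v) (q + dot q v *s p)"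
    and "dot (q + dot q v *s p) (w + dot p w *s v) = 0"
proof -
  let ?x = "lin v p w q 1 1 0 0 0" and ?y = "lin v p w q 1 0 1 0 0"
  have "?x ** ?x = lin v p w q 1 0 0 0 0" unfolding lin_mult[OF pv qw]
    by (rule lin_cong) (simp_all add: two)
  hence xx: "?x ** ?x = mat 1" by (simp only: lin_I)
  have "?x ** ?y ** ?x = lin v p w q 1 (dot p w * dot q v) 1 (dot p w) (dot q v)"
    unfolding lin_mult[OF pv qw] by (rule lin_cong) (simp_all add: two)
  thus "conj_op (mat 1 + outer v p) (mat 1 + outer w q)
           = mat 1 + outer (w + dot p w *s v) (q + dot q v *s p)"
    unfolding conj_op_def lin_x[of v p w q, symmetric] lin_y[of v p w q, symmetric] inv_self[OF xx] lin_gen .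
  have "dot (q + dot q v *s p) (w + dot p w *s v) =
     dot q w + dot p w * dot q v + dot q v * dot p w + dot q v * dot p w * dot p v"
    by (simp add: dot_def algebra_simps)
  also have "\<dots> = dot p w * dot q v + dot p w * dot q v" unfolding pv qw by (simp add: mult.commute)
  also have "\<dots> = 2 * (dot p w * dot q v)" by (simp only: mult_2)
  also have "\<dots> = 0" unfolding two by simp
  finally show "dot (q + dot q v *s p) (w + dot p w *s v) = 0" .
qed

lemma ins2:
  assumes "R a b" "R d a \<or> R a d" "R d b \<or> R b d"
  shows "\<exists>x y z. x \<in> {a,b,d} \<and> y \<in> {a,b,d} \<and> z \<in> {a,b,d} \<and> R x y \<and> R y z"
  using assms by blast

lemma ins3:
  assumes "R a b" "R b c" "R d a \<or> R a d" "R d b \<or> R b d" "R d c \<or> R c d"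
  shows "\<exists>x y z w. R x y \<and> R y z \<and> R z w \<and> x \<in> {a,b,c,d} \<and> y \<in> {a,b,c,d} \<and> z \<in> {a,b,c,d} \<and> w \<in> {a,b,c,d}"
  using assms by blast

lemma path4:
  assumes tot: "\<And>a b. a < (4::nat) \<Longrightarrow> b < 4 \<Longrightarrow> a \<noteq> b \<Longrightarrow> R a b \<or> R b a"
  shows "\<exists>x y z w. x < 4 \<and> y < 4 \<and> z < 4 \<and> w < 4 \<and> R x y \<and> R y z \<and> R z w"
proof -
  obtain a b where ab: "R a b" "a < 2" "b < 2"
    using tot[of 0 1] by force
  have "\<exists>x y z. x \<in> {a,b,2} \<and> y \<in> {a,b,2} \<and> z \<in> {a,b,2} \<and> R x y \<and> R y z"
    by (rule ins2[of R a b 2, OF ab(1)]) (use tot ab in auto)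
  then obtain x y z where m: "x \<in> {a,b,2}" "y \<in> {a,b,2}" "z \<in> {a,b,2}" and r: "R x y" "R y z" by blast
  have "x < 3" "y < 3" "z < 3" using m ab by auto
  note xyz = this r
  have "\<exists>x' y' z' w'. R x' y' \<and> R y' z' \<and> R z' w' \<and> x' \<in> {x,y,z,3} \<and> y' \<in> {x,y,z,3} \<and> z' \<in> {x,y,z,3} \<and> w' \<in> {x,y,z,3}"
    by (rule ins3[of R x y z 3, OF xyz(4,5)]) (use tot xyz in auto)
  then obtain x' y' z' w' where r2: "R x' y'" "R y' z'" "R z' w'" and
    m2: "x' \<in> {x,y,z,3}" "y' \<in> {x,y,z,3}" "z' \<in> {x,y,z,3}" "w' \<in> {x,y,z,3}" by blast
  have "x' < 4" "y' < 4" "z' < 4" "w' < 4" using m2 xyz by auto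
  thus ?thesis using r2 by blast
qed

lemma dot_add_left: "dot (x + k *s y) z = dot x z + k * dot y z"
  by (simp add: dot_def algebra_simps)
lemma dot_add_right: "dot z (x + k *s y) = dot z x + k * dot z y"
  by (simp add: dot_def algebra_simps)

lemma det_contra:
  fixes P1 P2 P3 V0 V1 V2 V3 :: "'a::field^3"
  assumes "dot P1 V0 = 0" "dot P2 V0 = 0" "dot P3 V0 = 0" "V0 \<noteq> 0"
    "dot P2 V1 = 0" "dot P3 V1 = 0" "dot P3 V2 = 0"
    "dot P1 V1 \<noteq> 0" "dot P2 V2 \<noteq> 0" "dot P3 V3 \<noteq> 0"
  shows False
proof -
  define F :: "'a^3^3" where "F = (\<chi> i. if i = 1 then P1 else if i = 2 then P2 else P3)"
  define W :: "'a^3^3" where "W = (\<chi> i j. (if j = 1 then V1 else if j = 2 then V2 else V3)$i)"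
  have Fv: "(F *v x)$i = dot (F$i) x" for x i
    by (simp add: matrix_vector_mult_def sum_3 dot_def)
  have FW: "(F ** W)$i$j = dot (F$i) (if j = 1 then V1 else if j = 2 then V2 else V3)" for i j
    by (simp add: matrix_matrix_mult_def sum_3 dot_def W_def)
  have F1: "F$1 = P1" and F2: "F$2 = P2" and F3: "F$3 = P3" by (simp_all add: F_def)
  have "F *v V0 = 0"
    unfolding vec_eq_iff forall_3 Fv F1 F2 F3 using assms by simp
  hence "det F = 0"
  proof -
    assume z: "F *v V0 = 0"
    show "det F = 0"
    proof (rule ccontr)
      assume "det F \<noteq> 0"
      hence "invertible F" by (simp add: invertible_det_nz)
      hence "inj ((*v) F)" by (rule inj_matrix_vector_mult)
      moreover have "F *v V0 = F *v 0" using z by simp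
      ultimately have "V0 = 0" by (rule injD)
      thus False using assms(4) by simp
    qed
  qed
  hence "det (F ** W) = 0" by (simp add: det_mul)
  moreover have "det (F ** W) = dot P1 V1 * dot P2 V2 * dot P3 V3"
    unfolding det_3 FW F1 F2 F3 using assms by simp
  ultimately show False using assms by simp
qed

lemma pair_zero:
  fixes v p w q :: "'a::{field,finite}^3"
  assumes two: "(2::'a) = 0" and sub: "is_subrack X conj_op Rb" and disj: "Ra \<inter> Rb = {}"
    and cl: "\<forall>x\<in>Ra. \<forall>y\<in>Rb. conj_op x y \<in> Rb"
    and xR: "mat 1 + outer v p \<in> Ra" and yR: "mat 1 + outer w q \<in> Rb"
    and pv: "dot p v = 0" and qw: "dot q w = 0"
  shows "dot p w * dot q v = 0"
proof (rule ccontr)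
  assume "dot p w * dot q v \<noteq> 0"
  hence sne: "dot p w \<noteq> 0" and tne: "dot q v \<noteq> 0" by auto
  have "mat 1 + outer v p \<in> Rb"
  proof (rule odd_case[OF two pv qw sne tne yR])
    show "\<forall>z\<in>Rb. conj_op (mat 1 + outer v p) z \<in> Rb" using cl xR by blast
    show "\<forall>z\<in>Rb. \<forall>z'\<in>Rb. conj_op z z' \<in> Rb" using sub by (simp add: is_subrack_def)
  qed
  thus False using xR disj by blast
qed

theorem mainTheorem17:
  fixes u :: "'a::{field,finite}^3^3"
  assumes "even CARD('a)"
    and "det u = 1"
    and "unipotent_type21 u"
  shows "\<not> rack_type_F (SL_conj_class u) conj_op"
proof
  have two: "(2::'a) = 0" using assms(1) by (rule char2)
  let ?X = "SL_conj_class u"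
  assume "rack_type_F ?X conj_op"
  then obtain R r where Rr: "\<forall>a<(4::nat). is_subrack ?X conj_op (R a) \<and> r a \<in> R a"
    and Rab: "\<forall>a<(4::nat). \<forall>b<(4::nat). a \<noteq> b \<longrightarrow> R a \<inter> R b = {} \<and>
        {conj_op x y | x y. x \<in> R a \<and> y \<in> R b} = R b \<and> conj_op (r a) (r b) \<noteq> r b"
    unfolding rack_type_F_def by blast
  have sub: "is_subrack ?X conj_op (R a)" if "a < 4" for a using Rr that by blast
  have ra: "r a \<in> R a" if "a < 4" for a using Rr that by blast
  have disj: "R a \<inter> R b = {}" if "a < 4" "b < 4" "a \<noteq> b" for a b using Rab that by blast
  have cl: "\<forall>x\<in>R a. \<forall>y\<in>R b. conj_op x y \<in> R b" if "a < 4" "b < 4" "a \<noteq> b" for a b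
  proof (intro ballI)
    fix x y assume "x \<in> R a" "y \<in> R b"
    hence "conj_op x y \<in> {conj_op x y | x y. x \<in> R a \<and> y \<in> R b}" by blast
    thus "conj_op x y \<in> R b" using Rab that by simp
  qed
  have nc: "conj_op (r a) (r b) \<noteq> r b" if "a < 4" "b < 4" "a \<noteq> b" for a b using Rab that by blast
  have "\<forall>a. \<exists>vp. a < 4 \<longrightarrow> r a = mat 1 + outer (fst vp) (snd vp) \<and> dot (snd vp) (fst vp) = 0 \<and> fst vp \<noteq> 0"
  proof
    fix a
    show "\<exists>vp. a < 4 \<longrightarrow> r a = mat 1 + outer (fst vp) (snd vp) \<and> dot (snd vp) (fst vp) = 0 \<and> fst vp \<noteq> 0"
    proof (cases "a < 4")
      case True
      have "r a \<in> ?X" using sub[OF True] ra[OF True] by (auto simp: is_subrack_def)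
      then obtain v p where "r a = mat 1 + outer v p" "dot p v = 0" "v \<noteq> 0"
        using class_rep[OF two assms(3)] by blast
      thus ?thesis by (intro exI[of _ "(v,p)"]) simp
    qed simp
  qed
  then obtain VP where VP: "\<forall>a. a < 4 \<longrightarrow> r a = mat 1 + outer (fst (VP a)) (snd (VP a)) \<and>
      dot (snd (VP a)) (fst (VP a)) = 0 \<and> fst (VP a) \<noteq> 0"
    by (rule choice[elim_format]) blast
  define V where "V a = fst (VP a)" for a
  define P where "P a = snd (VP a)" for a
  have rV: "r a = mat 1 + outer (V a) (P a)" and PV: "dot (P a) (V a) = 0" and Vnz: "V a \<noteq> 0"
    if "a < 4" for a using VP that by (auto simp: V_def P_def)
  define S where "S a b = dot (P a) (V b)" for a b
  have F1: "S a b * S b a = 0" if "a < 4" "b < 4" "a \<noteq> b" for a b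
  proof -
    have "dot (P a) (V b) * dot (P b) (V a) = 0"
    proof (rule pair_zero[OF two sub[OF that(2)] disj[OF that] cl[OF that]])
      show "mat 1 + outer (V a) (P a) \<in> R a" using ra[OF that(1)] rV[OF that(1)] by simp
      show "mat 1 + outer (V b) (P b) \<in> R b" using ra[OF that(2)] rV[OF that(2)] by simp
      show "dot (P a) (V a) = 0" "dot (P b) (V b) = 0" using PV that by auto
    qed
    thus ?thesis by (simp add: S_def)
  qed
  have F2: "S a b \<noteq> 0 \<or> S b a \<noteq> 0" if "a < 4" "b < 4" "a \<noteq> b" for a b
  proof (rule ccontr)
    assume "\<not> (S a b \<noteq> 0 \<or> S b a \<noteq> 0)"
    hence z: "dot (P a) (V b) = 0" "dot (P b) (V a) = 0" by (auto simp: S_def)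
    have "conj_op (r a) (r b) = r b"
      unfolding rV[OF that(1)] rV[OF that(2)] conj_formula(1)[OF two PV[OF that(1)] PV[OF that(2)]] z
      by simp
    thus False using nc[OF that] by simp
  qed
  have F3: False if "a < 4" "b < 4" "c < 4" "a \<noteq> b" "b \<noteq> c" "c \<noteq> a"
    "S a b \<noteq> 0" "S b c \<noteq> 0" "S c a \<noteq> 0" for a b c
  proof -
    have sba: "S b a = 0" using F1[of a b] that by simp
    have scb: "S c b = 0" using F1[of b c] that by simp
    let ?v = "V b + S a b *s V a" and ?p = "P b + S b a *s P a"
    have y': "conj_op (r a) (r b) = mat 1 + outer ?v ?p"
      unfolding rV[OF that(1)] rV[OF that(2)] conj_formula(1)[OF two PV[OF that(1)] PV[OF that(2)]]
      by (simp add: S_def)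
    have dp: "dot ?p ?v = 0"
      using conj_formula(2)[OF two PV[OF that(1)] PV[OF that(2)]] by (simp add: S_def)
    have yR: "mat 1 + outer ?v ?p \<in> R b"
      using cl[OF that(1,2,4)] ra[OF that(1)] ra[OF that(2)] y' by metis
    have "dot ?p (V c) * dot (P c) ?v = 0"
    proof (rule pair_zero[OF two sub[OF that(3)] disj[OF that(2,3,5)] cl[OF that(2,3,5)] yR])
      show "mat 1 + outer (V c) (P c) \<in> R c" using ra[OF that(3)] rV[OF that(3)] by simp
      show "dot ?p ?v = 0" by (rule dp)
      show "dot (P c) (V c) = 0" using PV that by auto
    qed
    hence "S b c * (S a b * S c a) = 0"
      by (simp add: dot_add_left dot_add_right S_def[symmetric] sba scb)
    thus False using that by simp
  qed
  have tot: "(S a b \<noteq> 0) \<or> (S b a \<noteq> 0)" if "a < 4" "b < 4" "a \<noteq> b" for a b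
    using F2[OF that] .
  obtain x y z w where xyzw: "x < 4" "y < 4" "z < 4" "w < 4"
    and r1: "S x y \<noteq> 0" and r2: "S y z \<noteq> 0" and r3: "S z w \<noteq> 0"
    using path4[of "\<lambda>a b. S a b \<noteq> 0", OF tot] by blast
  have Saa: "S a a = 0" if "a < 4" for a using PV[OF that] by (simp add: S_def)
  have xy: "x \<noteq> y" using r1 Saa xyzw by auto
  have yz: "y \<noteq> z" using r2 Saa xyzw by auto
  have syx: "S y x = 0" using F1[of x y] xyzw xy r1 by simp
  have szy: "S z y = 0" using F1[of y z] xyzw yz r2 by simp
  have szx: "S z x = 0"
  proof (cases "z = x")
    case True thus ?thesis using Saa xyzw by simp
  next
    case False
    show ?thesis
    proof (rule ccontr)
      assume "S z x \<noteq> 0"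
      thus False using F3[of x y z] xyzw xy yz False r1 r2 by auto
    qed
  qed
  show False
  proof (rule det_contra[of "P x" "V x" "P y" "P z" "V y" "V z" "V w"])
    show "dot (P x) (V x) = 0" "dot (P y) (V x) = 0" "dot (P z) (V x) = 0"
      using Saa[of x] syx szx xyzw by (simp_all add: S_def)
    show "V x \<noteq> 0" using Vnz xyzw by simp
    show "dot (P y) (V y) = 0" "dot (P z) (V y) = 0" "dot (P z) (V z) = 0"
      using Saa[of y] Saa[of z] szy xyzw by (simp_all add: S_def)
    show "dot (P x) (V y) \<noteq> 0" "dot (P y) (V z) \<noteq> 0" "dot (P z) (V w) \<noteq> 0"
      using r1 r2 r3 by (simp_all add: S_def)
  qed
qed

end
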